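(* Let $1\le a<b<c\le n$ and let $M$ be the rank-$3$ shifted matroid on $[n]$ indexed by $\{a,b,c\}$, i.e. the matroid with bases $\{\{a',b',c'\}:1\le a'<b'<c'\le n,\ a'\le a,\ b'\le b,\ c'\le c\}$. Then $M$ is DJS if and only if $\lfloor\frac{c-b}{2}\rfloor<a$.
   Context: A rank-$3$ matroid $M$ on $[n]$ is called DJS if, letting $E$ be the set of non-loop elements of $M$, every linear ordering $w_1w_2\cdots w_m$ of $E$ has three consecutive elements $\{w_j,w_{j+1},w_{j+2}\}$ forming a basis of $M$. *)

theory Defs
  imports Main
begin

definition shifted_bases :: "nat \<Rightarrow> nat \<Rightarrow> nat \<Rightarrow> nat \<Rightarrow> nat set set" where
  "shifted_bases n a b c =
     {{a', b', c'} | a' b' c'. 1 \<le> a' \<and> a' < b' \<and> b' < c' \<and> c' \<le> n \<and>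
                              a' \<le> a \<and> b' \<le> b \<and> c' \<le> c}"

definition nonloops :: "'a set \<Rightarrow> 'a set set \<Rightarrow> 'a set" where
  "nonloops E B = {x \<in> E. \<exists>X\<in>B. x \<in> X}"

definition DJS :: "'a set \<Rightarrow> 'a set set \<Rightarrow> bool" where
  "DJS E B \<longleftrightarrow>
     (\<forall>w. distinct w \<and> set w = nonloops E B \<longrightarrow>
        (\<exists>j. j + 2 < length w \<and> {w ! j, w ! (j + 1), w ! (j + 2)} \<in> B))"

end

theory Submission
  imports Defs
begin
lemma basis_intro:
  assumes "a < b" "b < c" "c \<le> n"
    and "x \<in> {1..c}" "y \<in> {1..c}" "z \<in> {1..c}" "x \<noteq> y" "x \<noteq> z" "y \<noteq> z"
    and "x \<le> a" "y \<le> b"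
  shows "{x, y, z} \<in> shifted_bases n a b c"
proof -
  have ex: "\<And>u v t. 1 \<le> u \<Longrightarrow> u < v \<Longrightarrow> v < t \<Longrightarrow> t \<le> n \<Longrightarrow> u \<le> a \<Longrightarrow> v \<le> b \<Longrightarrow> t \<le> c
     \<Longrightarrow> {u, v, t} \<in> shifted_bases n a b c"
    unfolding shifted_bases_def by blast
  consider "x < y" "y < z" | "x < z" "z < y" | "y < x" "x < z" | "y < z" "z < x" | "z < x" "x < y" | "z < y" "y < x"
    using assms by linarith
  then show ?thesis
  proof cases
    case 1 then show ?thesis using ex[of x y z] assms by auto
  next
    case 2 then show ?thesis using ex[of x z y] assms by (auto simp: insert_commute)
  next
    case 3 then show ?thesis using ex[of y x z] assms by (auto simp: insert_commute)
  next
    case 4 then show ?thesis using ex[of y z x] assms by (auto simp: insert_commute)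
  next
    case 5 then show ?thesis using ex[of z x y] assms by (auto simp: insert_commute)
  next
    case 6 then show ?thesis using ex[of z y x] assms by (auto simp: insert_commute)
  qed
qed

lemma basis_dest:
  assumes "{x, y, z} \<in> shifted_bases n a b c" "a < b"
  shows "(x \<le> a \<or> y \<le> a \<or> z \<le> a) \<and> ((x \<le> b \<and> y \<le> b) \<or> (x \<le> b \<and> z \<le> b) \<or> (y \<le> b \<and> z \<le> b))"
proof -
  obtain u v t where uvt: "{x,y,z} = {u,v,t}" "u < v" "v < t" "u \<le> a" "v \<le> b"
    using assms(1) unfolding shifted_bases_def by blast
  have "u = x \<or> u = y \<or> u = z" "v = x \<or> v = y \<or> v = z" using uvt(1) by blast+
  then show ?thesis using uvt assms(2) by (elim disjE) auto
qed

lemma L65: "1 \<le> a \<Longrightarrow> a < b \<Longrightarrow> b < c \<Longrightarrow> c \<le> n \<Longrightarrow> {1, 2, c} \<in> shifted_bases n a b c"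
  by (rule basis_intro[of a b c n]) simp_all
lemma L70: "1 \<le> a \<Longrightarrow> a < b \<Longrightarrow> b < c \<Longrightarrow> c \<le> n \<Longrightarrow> x \<in> {1..c} \<Longrightarrow> x \<noteq> 1 \<Longrightarrow> x \<le> a \<Longrightarrow> {x, 1, c} \<in> shifted_bases n a b c"
  by (rule basis_intro[of a b c n]) simp_all
lemma L79: "1 \<le> a \<Longrightarrow> a < b \<Longrightarrow> b < c \<Longrightarrow> c \<le> n \<Longrightarrow> x \<in> {1..c} \<Longrightarrow> \<not> x \<le> a \<Longrightarrow> x \<le> b \<Longrightarrow> {1, x, c} \<in> shifted_bases n a b c"
  by (rule basis_intro[of a b c n]) simp_all
lemma L84: "1 \<le> a \<Longrightarrow> a < b \<Longrightarrow> b < c \<Longrightarrow> c \<le> n \<Longrightarrow> x \<in> {1..c} \<Longrightarrow> \<not> x \<le> a \<Longrightarrow> \<not> x \<le> b \<Longrightarrow> {1, 2, x} \<in> shifted_bases n a b c"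
  by (rule basis_intro[of a b c n]) simp_all
lemma nonloops_eq:
  assumes "1 \<le> a" "a < b" "b < c" "c \<le> n"
  shows "nonloops {1..n} (shifted_bases n a b c) = {1..c}"
proof
  show "nonloops {1..n} (shifted_bases n a b c) \<subseteq> {1..c}"
  proof
    fix x assume "x \<in> nonloops {1..n} (shifted_bases n a b c)"
    then obtain X where X: "X \<in> shifted_bases n a b c" "x \<in> X" unfolding nonloops_def mem_Collect_eq by (elim conjE bexE)
    from X(1) obtain u v t where "X = {u,v,t}" "1 \<le> u" "u < v" "v < t" "t \<le> c"
      unfolding shifted_bases_def mem_Collect_eq by (elim exE conjE)
    then show "x \<in> {1..c}" using X(2) by auto
  qed
next
  show "{1..c} \<subseteq> nonloops {1..n} (shifted_bases n a b c)"
  proof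
    fix x assume x: "x \<in> {1..c}"
    have "\<exists>X\<in>shifted_bases n a b c. x \<in> X"
    proof (cases "x \<le> a")
      case T1: True
      show ?thesis
      proof (cases "x = 1")
        case True
        show ?thesis by (rule bexI[OF _ L65[OF assms]]) (simp add: True)
      next
        case False
        show ?thesis by (rule bexI[OF _ L70[OF assms x False T1]]) simp
      qed
    next
      case F1: False
      show ?thesis
      proof (cases "x \<le> b")
        case True
        show ?thesis by (rule bexI[OF _ L79[OF assms x F1 True]]) simp
      next
        case False
        show ?thesis by (rule bexI[OF _ L84[OF assms x F1 False]]) simp
      qed
    qed
    moreover have "x \<in> {1..n}" using x assms by simp
    ultimately show "x \<in> nonloops {1..n} (shifted_bases n a b c)"
      unfolding nonloops_def by simp
  qed
qed


definition ff :: "nat \<Rightarrow> nat \<Rightarrow> nat \<Rightarrow> nat \<Rightarrow> nat" where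
  "ff a b c k = (if k < 3*a then (if k mod 3 = 0 then k div 3 + 1 else b + 2*(k div 3) + k mod 3)
      else if k < a + (c - b) then k + b + 1 - a else k + b + 1 - c)"

lemma ff0: "ff a b c (3*q) = (if q < a then q+1 else if 3*q < a+(c-b) then 3*q+b+1-a else 3*q+b+1-c)"
  unfolding ff_def by simp
lemma d1: "Suc (3*q) div 3 = q" "Suc (3*q) mod 3 = 1" "Suc (Suc (3*q)) div 3 = q" "Suc (Suc (3*q)) mod 3 = 2"
  by presburger+
lemma ff1: "ff a b c (Suc (3*q)) = (if q < a then b+2*q+1 else if 3*q+1 < a+(c-b) then 3*q+1+b+1-a else 3*q+1+b+1-c)"
  unfolding ff_def d1 by auto
lemma ff2: "ff a b c (Suc (Suc (3*q))) = (if q < a then b+2*q+2 else if 3*q+2 < a+(c-b) then 3*q+2+b+1-a else 3*q+2+b+1-c)"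
  unfolding ff_def d1 by auto

lemma split3: fixes k :: nat
  obtains q where "k = 3*q" | q where "k = 3*q+1" | q where "k = 3*q+2"
proof -
  have "k = 3*(k div 3) \<or> k = 3*(k div 3) + 1 \<or> k = 3*(k div 3) + 2" by presburger
  then show ?thesis
    using that(1)[of "k div 3"] that(2)[of "k div 3"] that(3)[of "k div 3"] by blast
qed

lemma ff_range:
  assumes "1 \<le> a" "a < b" "b < c" "2*a \<le> c - b" "k < c"
  shows "ff a b c k \<in> {1..c}"
  using assms by (cases k rule: split3) (auto simp: ff0 ff1 ff2 d1)

lemma ff_inj:
  assumes "1 \<le> a" "a < b" "b < c" "2*a \<le> c - b" "k < c" "l < c" "ff a b c k = ff a b c l"
  shows "k = l"
  using assms by (cases k rule: split3; cases l rule: split3) (auto simp: ff0 ff1 ff2 d1 split: if_splits)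

lemma ff_a:
  assumes "1 \<le> a" "a < b" "b < c" "2*a \<le> c - b" "k < c" "ff a b c k \<le> a"
  shows "k < 3*a \<and> k mod 3 = 0"
  using assms by (cases k rule: split3) (auto simp: ff0 ff1 ff2 d1 split: if_splits)

lemma ff_b:
  assumes "1 \<le> a" "a < b" "b < c" "2*a \<le> c - b" "k < c" "ff a b c k \<le> b"
  shows "3*a \<le> k \<or> k mod 3 = 0"
  using assms by (cases k rule: split3) (auto simp: ff0 ff1 ff2 d1 split: if_splits)

lemma win_arith:
  fixes j a :: nat
  assumes "(j < 3*a \<and> j mod 3 = 0) \<or> (j+1 < 3*a \<and> (j+1) mod 3 = 0) \<or> (j+2 < 3*a \<and> (j+2) mod 3 = 0)"
  and "((3*a \<le> j \<or> j mod 3 = 0) \<and> (3*a \<le> j+1 \<or> (j+1) mod 3 = 0)) \<or>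
            ((3*a \<le> j \<or> j mod 3 = 0) \<and> (3*a \<le> j+2 \<or> (j+2) mod 3 = 0)) \<or>
            ((3*a \<le> j+1 \<or> (j+1) mod 3 = 0) \<and> (3*a \<le> j+2 \<or> (j+2) mod 3 = 0))"
  shows False
proof (cases j rule: split3)
  case (1 q)
  have m: "j mod 3 = 0" "(j+1) mod 3 = 1" "(j+2) mod 3 = 2" using 1 by presburger+
  have "q < a" using assms(1) 1 m by auto
  then show False using assms(2) 1 m by auto
next
  case (2 q)
  have m: "j mod 3 = 1" "(j+1) mod 3 = 2" "(j+2) mod 3 = 0" using 2 by presburger+
  have "q + 1 < a" using assms(1) 2 m by auto
  then show False using assms(2) 2 m by auto
next
  case (3 q)
  have m: "j mod 3 = 2" "(j+1) mod 3 = 0" "(j+2) mod 3 = 1" using 3 by presburger+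
  have "q + 1 < a" using assms(1) 3 m by auto
  then show False using assms(2) 3 m by auto
qed

lemma not_DJS:
  assumes "1 \<le> a" "a < b" "b < c" "c \<le> n" "2*a \<le> c - b"
  shows "\<not> DJS {1..n} (shifted_bases n a b c)"
proof
  assume D: "DJS {1..n} (shifted_bases n a b c)"
  define w where "w = map (ff a b c) [0..<c]"
  have len: "length w = c" unfolding w_def by simp
  have nth: "\<And>i. i < c \<Longrightarrow> w ! i = ff a b c i" unfolding w_def by simp
  have inj: "inj_on (ff a b c) {0..<c}"
  proof (rule inj_onI)
    fix x y assume "x \<in> {0..<c}" "y \<in> {0..<c}" "ff a b c x = ff a b c y"
    then show "x = y" using ff_inj[OF assms(1,2,3,5), of x y] by simp
  qed
  have dist: "distinct w" unfolding w_def using inj by (simp add: distinct_map)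
  have sub: "set w \<subseteq> {1..c}"
  proof
    fix x assume "x \<in> set w"
    then obtain i where "i < c" "x = ff a b c i" unfolding w_def by auto
    then show "x \<in> {1..c}" using ff_range[OF assms(1,2,3,5), of i] by simp
  qed
  have "card (set w) = c" using dist len by (simp add: distinct_card)
  then have setw: "set w = {1..c}" using card_subset_eq[OF _ sub] by simp
  have pre: "distinct w \<and> set w = nonloops {1..n} (shifted_bases n a b c)"
    using dist setw nonloops_eq[OF assms(1-4)] by simp
  obtain j where j: "j + 2 < length w" "{w ! j, w ! (j + 1), w ! (j + 2)} \<in> shifted_bases n a b c"
    using D[unfolded DJS_def, rule_format, OF pre] by (elim exE conjE)
  have jc: "j + 2 < c" using j len by simp
  let ?f = "ff a b c"
  have B: "(?f j \<le> a \<or> ?f (j+1) \<le> a \<or> ?f (j+2) \<le> a) \<and>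
      ((?f j \<le> b \<and> ?f (j+1) \<le> b) \<or> (?f j \<le> b \<and> ?f (j+2) \<le> b) \<or> (?f (j+1) \<le> b \<and> ?f (j+2) \<le> b))"
  proof -
    have e: "w ! j = ?f j" "w ! (j+1) = ?f (j+1)" "w ! (j+2) = ?f (j+2)" using nth jc by auto
    show ?thesis using basis_dest[OF j(2)[unfolded e] assms(2)] .
  qed
  have A: "\<And>k. k < c \<Longrightarrow> ?f k \<le> a \<Longrightarrow> k < 3*a \<and> k mod 3 = 0"
    by (rule ff_a[OF assms(1,2,3,5)])
  have Bb: "\<And>k. k < c \<Longrightarrow> ?f k \<le> b \<Longrightarrow> 3*a \<le> k \<or> k mod 3 = 0"
    by (rule ff_b[OF assms(1,2,3,5)])
  have c0: "j < c" "j + 1 < c" using jc by auto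
  have X1: "(j < 3*a \<and> j mod 3 = 0) \<or> (j+1 < 3*a \<and> (j+1) mod 3 = 0) \<or> (j+2 < 3*a \<and> (j+2) mod 3 = 0)"
  proof -
    have "?f j \<le> a \<or> ?f (j+1) \<le> a \<or> ?f (j+2) \<le> a" using B by (rule conjunct1)
    then show ?thesis
    proof (elim disjE)
      assume "?f j \<le> a" then show ?thesis using A[OF c0(1)] by (intro disjI1)
    next
      assume "?f (j+1) \<le> a" then show ?thesis using A[OF c0(2)] by (intro disjI2 disjI1)
    next
      assume "?f (j+2) \<le> a" then show ?thesis using A[OF jc] by (intro disjI2)
    qed
  qed
  have X2: "((3*a \<le> j \<or> j mod 3 = 0) \<and> (3*a \<le> j+1 \<or> (j+1) mod 3 = 0)) \<or>
            ((3*a \<le> j \<or> j mod 3 = 0) \<and> (3*a \<le> j+2 \<or> (j+2) mod 3 = 0)) \<or>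
            ((3*a \<le> j+1 \<or> (j+1) mod 3 = 0) \<and> (3*a \<le> j+2 \<or> (j+2) mod 3 = 0))"
  proof -
    have "((?f j \<le> b \<and> ?f (j+1) \<le> b) \<or> (?f j \<le> b \<and> ?f (j+2) \<le> b) \<or> (?f (j+1) \<le> b \<and> ?f (j+2) \<le> b))"
      using B by (rule conjunct2)
    moreover note Bb[OF c0(1)] Bb[OF c0(2)] Bb[OF jc]
    ultimately show ?thesis by metis
  qed
  show False using win_arith[OF X1 X2] .
qed

lemma count_pos:
  assumes "distinct w" "set w = {1..c}" "S \<subseteq> {1..c}"
  shows "card {p. p < length w \<and> w ! p \<in> S} = card S"
proof -
  let ?P = "{p. p < length w \<and> w ! p \<in> S}"
  have inj: "inj_on (nth w) ?P" by (rule inj_on_nth) (use assms(1) in auto)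
  have "nth w ` ?P = S"
  proof
    show "nth w ` ?P \<subseteq> S" by auto
  next
    show "S \<subseteq> nth w ` ?P"
    proof
      fix s assume s: "s \<in> S"
      then have "s \<in> set w" using assms(2,3) by blast
      then obtain p where "p < length w" "w ! p = s" by (auto simp: in_set_conv_nth)
      then show "s \<in> nth w ` ?P" using s by force
    qed
  qed
  then show ?thesis using card_image[OF inj] by simp
qed

lemma is_DJS:
  assumes "1 \<le> a" "a < b" "b < c" "c \<le> n" "(c - b) div 2 < a"
  shows "DJS {1..n} (shifted_bases n a b c)"
  unfolding DJS_def nonloops_eq[OF assms(1-4)]
proof (intro allI impI)
  fix w :: "nat list"
  assume h: "distinct w \<and> set w = {1..c}"
  then have dist: "distinct w" and setw: "set w = {1..c}" by auto
  define m where "m = length w"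
  have "card (set w) = m" using distinct_card[OF dist] m_def by simp
  then have mc: "m = c" using setw by simp
  have m3: "3 \<le> m" using mc assms by linarith
  have mem: "\<And>i. i < m \<Longrightarrow> w ! i \<in> {1..c}" using setw m_def nth_mem by blast
  have injw: "\<And>i k. i < m \<Longrightarrow> k < m \<Longrightarrow> w ! i = w ! k \<Longrightarrow> i = k"
    using dist m_def nth_eq_iff_index_eq by blast
  show "\<exists>j. j + 2 < length w \<and> {w ! j, w ! (j + 1), w ! (j + 2)} \<in> shifted_bases n a b c"
  proof (rule ccontr)
    assume nb: "\<not> (\<exists>j. j + 2 < length w \<and> {w ! j, w ! (j + 1), w ! (j + 2)} \<in> shifted_bases n a b c)"
    have key: "b < w ! k" if hp: "p < m" "k < m" "k \<noteq> p" "k \<le> p + 2" "p \<le> k + 2" "w ! p \<le> a" for p k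
    proof (rule ccontr)
      assume "\<not> b < w ! k"
      then have wk: "w ! k \<le> b" by simp
      define j where "j = min (min p k) (m - 3)"
      have jm: "j + 2 < m" using j_def m3 by simp
      have jp: "j \<le> p" "p \<le> j + 2" "j \<le> k" "k \<le> j + 2" using j_def hp m3 by auto
      define r where "r = 3 * j + 3 - p - k"
      have six: "(p = j \<and> k = j+1) \<or> (p = j \<and> k = j+2) \<or> (p = j+1 \<and> k = j) \<or>
                 (p = j+1 \<and> k = j+2) \<or> (p = j+2 \<and> k = j) \<or> (p = j+2 \<and> k = j+1)"
        using jp hp(3) by arith
      have rr: "r < m" "r \<noteq> p" "r \<noteq> k" using six r_def jm by auto
      have d1: "w ! p \<noteq> w ! k" using injw hp by blast
      have d2: "w ! p \<noteq> w ! r" using injw hp rr by metis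
      have d3: "w ! k \<noteq> w ! r" using injw hp rr by metis
      have bas: "{w ! p, w ! k, w ! r} \<in> shifted_bases n a b c"
        by (rule basis_intro[of a b c n]) (use assms mem hp rr d1 d2 d3 wk in simp_all)
      have win: "{w ! j, w ! (j + 1), w ! (j + 2)} \<in> shifted_bases n a b c"
        using six
      proof (elim disjE conjE)
        assume "p = j" "k = j + 1" then have "r = j + 2" using r_def by simp
        then show ?thesis using bas \<open>p = j\<close> \<open>k = j + 1\<close> by (simp add: insert_commute)
      next
        assume "p = j" "k = j + 2" then have "r = j + 1" using r_def by simp
        then show ?thesis using bas \<open>p = j\<close> \<open>k = j + 2\<close> by (simp add: insert_commute)
      next
        assume "p = j + 1" "k = j" then have "r = j + 2" using r_def by simp
        then show ?thesis using bas \<open>p = j + 1\<close> \<open>k = j\<close> by (simp add: insert_commute)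
      next
        assume "p = j + 1" "k = j + 2" then have "r = j" using r_def by simp
        then show ?thesis using bas \<open>p = j + 1\<close> \<open>k = j + 2\<close> by (simp add: insert_commute)
      next
        assume "p = j + 2" "k = j" then have "r = j + 1" using r_def by simp
        then show ?thesis using bas \<open>p = j + 2\<close> \<open>k = j\<close> by (simp add: insert_commute)
      next
        assume "p = j + 2" "k = j + 1" then have "r = j" using r_def by simp
        then show ?thesis using bas \<open>p = j + 2\<close> \<open>k = j + 1\<close> by (simp add: insert_commute)
      qed
      show False using nb jm win m_def by blast
    qed
    have "a + 1 \<in> set w" using setw assms by simp
    then obtain q where q: "q < m" "w ! q = a + 1" using m_def by (auto simp: in_set_conv_nth)
    define Ap where "Ap = {p. p < length w \<and> w ! p \<in> {1..a}}"
    define Cp where "Cp = {p. p < length w \<and> w ! p \<in> {b+1..c}}"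
    have cardA: "card Ap = a" unfolding Ap_def using count_pos[OF dist setw, of "{1..a}"] assms by simp
    have cardC: "card Cp = c - b" unfolding Cp_def using count_pos[OF dist setw, of "{b+1..c}"] assms by simp
    have Ap_le: "\<And>p. p \<in> Ap \<Longrightarrow> p < m \<and> w ! p \<le> a" unfolding Ap_def m_def by simp
    have far: "p + 3 \<le> q \<or> q + 3 \<le> p" if "p \<in> Ap" for p
    proof (rule ccontr)
      assume nf: "\<not> (p + 3 \<le> q \<or> q + 3 \<le> p)"
      have pa: "p < m" "w ! p \<le> a" using Ap_le[OF that] by auto
      have "q \<noteq> p" using pa q by auto
      then have "b < w ! q" using key[of p q] pa q nf by linarith
      then show False using q assms by linarith
    qed
    have sep: "p + 3 \<le> p' \<or> p' + 3 \<le> p" if "p \<in> Ap" "p' \<in> Ap" "p \<noteq> p'" for p p'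
    proof (rule ccontr)
      assume nf: "\<not> (p + 3 \<le> p' \<or> p' + 3 \<le> p)"
      have pa: "p < m" "w ! p \<le> a" "p' < m" "w ! p' \<le> a" using Ap_le that by auto
      then have "b < w ! p'" using key[of p p'] that(3) nf by linarith
      then show False using pa assms by linarith
    qed
    define g where "g = (\<lambda>(p, i::nat). if p < q then p + 1 + i else p - 1 - i)"
    have ginj: "inj_on g (Ap \<times> {0, 1})"
    proof (rule inj_onI)
      fix x y assume x: "x \<in> Ap \<times> {0, 1}" and y: "y \<in> Ap \<times> {0, 1}" and e: "g x = g y"
      obtain p i where xp: "x = (p, i)" by (cases x)
      obtain p' i' where yp: "y = (p', i')" by (cases y)
      have pA: "p \<in> Ap" "p' \<in> Ap" "i \<le> 1" "i' \<le> 1" using x y xp yp by auto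
      have fp: "p + 3 \<le> q \<or> q + 3 \<le> p" "p' + 3 \<le> q \<or> q + 3 \<le> p'" using far pA by auto
      have e2: "(if p < q then p + 1 + i else p - 1 - i) = (if p' < q then p' + 1 + i' else p' - 1 - i')"
        using e xp yp g_def by simp
      show "x = y"
      proof (cases "p = p'")
        case True
        then show ?thesis using e2 xp yp fp pA by (auto split: if_splits)
      next
        case False
        then have "p + 3 \<le> p' \<or> p' + 3 \<le> p" using sep pA by blast
        then show ?thesis using e2 fp pA by (auto split: if_splits)
      qed
    qed
    have gsub: "g ` (Ap \<times> {0, 1}) \<subseteq> Cp"
    proof
      fix y assume "y \<in> g ` (Ap \<times> {0, 1})"
      then obtain p i where pi: "p \<in> Ap" "i \<le> 1" "y = g (p, i)" by auto
      have pa: "p < m" "w ! p \<le> a" using Ap_le[OF pi(1)] by auto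
      have fp: "p + 3 \<le> q \<or> q + 3 \<le> p" using far pi(1) by auto
      have yv: "y = (if p < q then p + 1 + i else p - 1 - i)" using pi g_def by simp
      have ym: "y < m" "y \<noteq> p" "y \<le> p + 2" "p \<le> y + 2" using yv fp q pi(2) pa(1) by (auto split: if_splits)
      have "b < w ! y" using key[OF pa(1) ym(1) ym(2) ym(3) ym(4) pa(2)] .
      moreover have "w ! y \<le> c" using mem[OF ym(1)] by simp
      ultimately show "y \<in> Cp" unfolding Cp_def using ym(1) m_def by simp
    qed
    have fin: "finite Cp" unfolding Cp_def by simp
    have "card (Ap \<times> {0::nat, 1}) \<le> card Cp" using card_inj_on_le[OF ginj gsub fin] .
    moreover have "card (Ap \<times> {0::nat, 1}) = 2 * a" using cardA by (simp add: card_cartesian_product)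
    ultimately have "2 * a \<le> c - b" using cardC by simp
    then show False using assms(5) by linarith
  qed
qed

theorem proposition6p8:
  fixes n a b c :: nat
  assumes "1 \<le> a" and "a < b" and "b < c" and "c \<le> n"
  shows "DJS {1..n} (shifted_bases n a b c) \<longleftrightarrow> (c - b) div 2 < a"
proof
  assume "DJS {1..n} (shifted_bases n a b c)"
  then show "(c - b) div 2 < a"
    using not_DJS[OF assms] by linarith
next
  assume "(c - b) div 2 < a"
  then show "DJS {1..n} (shifted_bases n a b c)" using is_DJS[OF assms] by blast
qed

end
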